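(* Let $A$ and $B$ be weighted geometric mean closed Archimedean $\Phi$-algebras over $\mathbb{K}$ with unit elements $e$ and $e'$ respectively. Let $C$ be a $\Phi$-subalgebra of $A$ and let $T\colon C\to B$ be a multiplicative vector lattice homomorphism with $T(e)=e'$. Let $a\in A^+$ and $r\in(0,\infty)$. If $a\in C$ and $a^r\in C$, then $T(a^r)=\bigl(T(a)\bigr)^r$.
   Context: $\mathbb{K}$ denotes $\mathbb{R}$ or $\mathbb{C}$. An Archimedean vector lattice over $\mathbb{C}$ is $E+iE$ where $E$ is an Archimedean real vector lattice in which $\sup\{(\cos\theta)f+(\sin\theta)g:\theta\in[0,2\pi]\}$ exists for all $f,g$, with modulus $|f+ig|$ equal to that supremum; over $\mathbb{R}$ it is an Archimedean real vector lattice. $A^+=\{a:|a|=a\}$, $A_\rho=A^+-A^+$ with its real lattice order. An Archimedean $\Phi$-algebra over $\mathbb{K}$: $A_\rho$ is an $f$-algebra with multiplicative identity (multiplication extended complex-bilinearly in the complex case); a $\Phi$-subalgebra is a subalgebra and vector sublattice containing the unit. $A$ is weighted geometric mean closed if for all $f_1,\dots,f_n\in A$, $r_k\in(0,1)$ with $\sum r_k=1$, $\triangle_{k=1}^n(f_k,r_k):=\inf\{\sum r_k\theta_k|f_k|:\theta_k>0,\ \prod\theta_k^{r_k}=1\}$ exists in $A$. For $a\in A^+$ and $r\in(0,\infty)$, with $\lfloor r\rfloor=\max\{n\in\mathbb{N}\cup\{0\}:n\le r\}$ and $\tilde r=r-\lfloor r\rfloor$, define $a^r=a^{\lfloor r\rfloor}\inf\{\tilde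 r\theta_1a+(1-\tilde r)\theta_2e:\theta_1,\theta_2\in(0,\infty),\ \theta_1^{\tilde r}\theta_2^{1-\tilde r}=1\}$, where $a^{0}=e$ and the infimum is taken to be $e$ when $\tilde r=0$ (so $a^r$ is the ordinary power for integer $r$). $T$ multiplicative means $T(ab)=T(a)T(b)$; vector lattice homomorphism means linear with $|T(f)|=T(|f|)$. *)

theory Defs
  imports Complex_Main "HOL-Library.Lattice_Algebras"
begin

text \<open>
An Archimedean Phi-algebra over K (K = R or C) is represented through its
real part E = A_rho, a type of class real_algebra_1 / lattice / ordered real vector
space.  Elements of the algebra A over K are pairs (x, y) of E, read as x + i y;
over R the imaginary part is required to be 0.  Operations are the complex-style
ones; the modulus over C is the supremum sup{cos t x + sin t y : t in [0, 2 pi]}.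
\<close>

datatype scalar_field = RealK | ComplexK

type_synonym 'a cpx = "'a \<times> 'a"

definition is_sup_E :: "'a::order set \<Rightarrow> 'a \<Rightarrow> bool" where
  "is_sup_E S s \<longleftrightarrow> (\<forall>x\<in>S. x \<le> s) \<and> (\<forall>u. (\<forall>x\<in>S. x \<le> u) \<longrightarrow> s \<le> u)"

definition inA :: "scalar_field \<Rightarrow> 'a::zero cpx \<Rightarrow> bool" where
  "inA K f \<longleftrightarrow> (K = RealK \<longrightarrow> snd f = 0)"

definition scalars :: "scalar_field \<Rightarrow> complex set" where
  "scalars K = (if K = RealK then range complex_of_real else UNIV)"

definition addA :: "'a::ab_group_add cpx \<Rightarrow> 'a cpx \<Rightarrow> 'a cpx" where
  "addA f g = (fst f + fst g, snd f + snd g)"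

definition subA :: "'a::ab_group_add cpx \<Rightarrow> 'a cpx \<Rightarrow> 'a cpx" where
  "subA f g = (fst f - fst g, snd f - snd g)"

definition smulA :: "complex \<Rightarrow> 'a::real_vector cpx \<Rightarrow> 'a cpx" where
  "smulA c f = (Re c *\<^sub>R fst f - Im c *\<^sub>R snd f, Re c *\<^sub>R snd f + Im c *\<^sub>R fst f)"

definition mulA :: "'a::ring cpx \<Rightarrow> 'a cpx \<Rightarrow> 'a cpx" where
  "mulA f g = (fst f * fst g - snd f * snd g, fst f * snd g + snd f * fst g)"

definition unitA :: "'a::{zero,one} cpx" where
  "unitA = (1, 0)"

definition powA_nat :: "'a::ring_1 cpx \<Rightarrow> nat \<Rightarrow> 'a cpx" where
  "powA_nat f n = (mulA f ^^ n) unitA"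

definition sumA :: "(nat \<Rightarrow> 'a::ab_group_add cpx) \<Rightarrow> nat \<Rightarrow> 'a cpx" where
  "sumA F n = ((\<Sum>k<n. fst (F k)), (\<Sum>k<n. snd (F k)))"

definition modA :: "scalar_field \<Rightarrow> 'a::{real_vector, lattice_ab_group_add} cpx \<Rightarrow> 'a cpx" where
  "modA K f = (if K = RealK then (sup (fst f) (- fst f), 0)
     else (THE s. is_sup_E {cos t *\<^sub>R fst f + sin t *\<^sub>R snd f | t. 0 \<le> t \<and> t \<le> 2 * pi} s, 0))"

definition posA :: "scalar_field \<Rightarrow> 'a::{real_vector, lattice_ab_group_add} cpx set" where
  "posA K = {a. inA K a \<and> modA K a = a}"

definition leA :: "scalar_field \<Rightarrow> 'a::{real_vector, lattice_ab_group_add} cpx \<Rightarrow> 'a cpx \<Rightarrow> bool" where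
  "leA K f g \<longleftrightarrow> subA g f \<in> posA K"

definition is_infA :: "scalar_field \<Rightarrow> 'a::{real_vector, lattice_ab_group_add} cpx set \<Rightarrow> 'a cpx \<Rightarrow> bool" where
  "is_infA K S s \<longleftrightarrow> inA K s \<and> (\<forall>x\<in>S. leA K s x) \<and>
     (\<forall>l. inA K l \<and> (\<forall>x\<in>S. leA K l x) \<longrightarrow> leA K l s)"

definition infA :: "scalar_field \<Rightarrow> 'a::{real_vector, lattice_ab_group_add} cpx set \<Rightarrow> 'a cpx" where
  "infA K S = (THE s. is_infA K S s)"

text \<open>Archimedean Phi-algebra over K: A_rho = E is an Archimedean f-algebra with unit
(the unit being the 1 of the ring structure); over C in addition the suprema defining
the modulus exist.\<close>
definition Phi_algebra :: "scalar_field \<Rightarrow> 'a::{real_algebra_1, lattice_ab_group_add, ordered_real_vector} itself \<Rightarrow> bool" where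
  "Phi_algebra K _ \<longleftrightarrow>
     (\<forall>a b::'a. 0 \<le> a \<longrightarrow> 0 \<le> b \<longrightarrow> 0 \<le> a * b) \<and>
     (\<forall>a b c::'a. inf a b = 0 \<longrightarrow> 0 \<le> c \<longrightarrow> inf (a * c) b = 0 \<and> inf (c * a) b = 0) \<and>
     (\<forall>x y::'a. (\<forall>n::nat. real n *\<^sub>R x \<le> y) \<longrightarrow> x \<le> 0) \<and>
     (K = ComplexK \<longrightarrow> (\<forall>f g::'a. \<exists>s. is_sup_E {cos t *\<^sub>R f + sin t *\<^sub>R g | t. 0 \<le> t \<and> t \<le> 2 * pi} s))"

definition wgm_closed :: "scalar_field \<Rightarrow> 'a::{real_algebra_1, lattice_ab_group_add, ordered_real_vector} itself \<Rightarrow> bool" where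
  "wgm_closed K _ \<longleftrightarrow>
     (\<forall>(n::nat) (f::nat \<Rightarrow> 'a cpx) (r::nat \<Rightarrow> real).
        (\<forall>k<n. inA K (f k)) \<and> (\<forall>k<n. 0 < r k \<and> r k < 1) \<and> (\<Sum>k<n. r k) = 1 \<longrightarrow>
        (\<exists>s. is_infA K {sumA (\<lambda>k. smulA (complex_of_real (r k * \<theta> k)) (modA K (f k))) n | \<theta>.
                          (\<forall>k<n. 0 < \<theta> k) \<and> (\<Prod>k<n. \<theta> k powr r k) = 1} s))"

definition powA :: "scalar_field \<Rightarrow> 'a::{real_algebra_1, lattice_ab_group_add, ordered_real_vector} cpx \<Rightarrow> real \<Rightarrow> 'a cpx" where
  "powA K a r =
     (let n = nat \<lfloor>r\<rfloor>; s = r - of_int \<lfloor>r\<rfloor> in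
      mulA (powA_nat a n)
        (if s = 0 then unitA
         else infA K {addA (smulA (complex_of_real (s * \<theta>1)) a)
                           (smulA (complex_of_real ((1 - s) * \<theta>2)) unitA) | \<theta>1 \<theta>2.
                      0 < \<theta>1 \<and> 0 < \<theta>2 \<and> \<theta>1 powr s * \<theta>2 powr (1 - s) = 1}))"

definition Phi_subalgebra :: "scalar_field \<Rightarrow> 'a::{real_algebra_1, lattice_ab_group_add, ordered_real_vector} cpx set \<Rightarrow> bool" where
  "Phi_subalgebra K C \<longleftrightarrow>
     (\<forall>f\<in>C. inA K f) \<and> (0, 0) \<in> C \<and> unitA \<in> C \<and>
     (\<forall>f\<in>C. \<forall>g\<in>C. addA f g \<in> C \<and> mulA f g \<in> C) \<and>
     (\<forall>c\<in>scalars K. \<forall>f\<in>C. smulA c f \<in> C) \<and>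
     (\<forall>f\<in>C. (fst f, 0) \<in> C \<and> (snd f, 0) \<in> C) \<and>
     (\<forall>x y. (x, 0) \<in> C \<longrightarrow> (y, 0) \<in> C \<longrightarrow> (sup x y, 0) \<in> C \<and> (inf x y, 0) \<in> C)"

definition mult_vl_hom :: "scalar_field \<Rightarrow> 'a::{real_algebra_1, lattice_ab_group_add, ordered_real_vector} cpx set
    \<Rightarrow> ('a cpx \<Rightarrow> 'b::{real_algebra_1, lattice_ab_group_add, ordered_real_vector} cpx) \<Rightarrow> bool" where
  "mult_vl_hom K C T \<longleftrightarrow>
     (\<forall>f\<in>C. inA K (T f)) \<and>
     (\<forall>f\<in>C. \<forall>g\<in>C. T (addA f g) = addA (T f) (T g)) \<and>
     (\<forall>c\<in>scalars K. \<forall>f\<in>C. T (smulA c f) = smulA c (T f)) \<and>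
     (\<forall>f\<in>C. modA K (T f) = T (modA K f)) \<and>
     (\<forall>f\<in>C. \<forall>g\<in>C. T (mulA f g) = mulA (T f) (T g))"

end

theory Submission imports Defs begin

definition fa :: "'e::{real_algebra_1, lattice_ab_group_add, ordered_real_vector} itself \<Rightarrow> bool" where
  "fa _ \<longleftrightarrow> (\<forall>a b::'e. 0 \<le> a \<longrightarrow> 0 \<le> b \<longrightarrow> 0 \<le> a * b) \<and>
     (\<forall>a b c::'e. inf a b = 0 \<longrightarrow> 0 \<le> c \<longrightarrow> inf (a * c) b = 0 \<and> inf (c * a) b = 0) \<and>
     (\<forall>x y::'e. (\<forall>n::nat. real n *\<^sub>R x \<le> y) \<longrightarrow> x \<le> 0)"

lemma Phi_fa: "Phi_algebra K TYPE('e::{real_algebra_1, lattice_ab_group_add, ordered_real_vector}) \<Longrightarrow> fa TYPE('e)"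
  unfolding Phi_algebra_def fa_def by blast

lemma sup_neg_nonneg: "0 \<le> sup (x::'e::lattice_ab_group_add) (- x)"
proof -
  have "x \<le> sup x (-x)" "- x \<le> sup x (-x)" by auto
  from add_mono[OF this] have "0 \<le> sup x (-x) + sup x (-x)" by simp
  then show ?thesis by simp
qed

lemma sup_neg_id: "0 \<le> (x::'e::lattice_ab_group_add) \<Longrightarrow> sup x (- x) = x"
  by (meson dual_order.trans neg_le_0_iff_le sup_absorb1)

lemma abs_prts': "sup (a::'e::lattice_ab_group_add) (- a) = sup a 0 - inf a 0"
proof -
  have "0 \<le> sup a (- a)" by (rule sup_neg_nonneg)
  then have "sup (sup a (- a)) 0 = sup a (- a)"
    by (rule sup_absorb1)
  then show ?thesis
    by (simp add: add_sup_inf_distribs ac_simps)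
qed

lemma pos_double: "sup (a::'e::lattice_ab_group_add) 0 + sup a 0 = a + sup a (- a)"
proof -
  have "a = sup a 0 + inf a 0" using prts[of a] by (simp add: pprt_def nprt_def)
  then show ?thesis using abs_prts'[of a] by (metis add.assoc add.commute diff_add_cancel)
qed

lemma double_cancel: "(a::'e::lattice_ab_group_add) + a = b + b \<Longrightarrow> a = b"
proof -
  assume "a + a = b + b"
  then have "(a - b) + (a - b) = 0" by (simp add: algebra_simps)
  then show ?thesis by simp
qed

lemma inf_via_sup: "inf (p::'e::lattice_ab_group_add) q = p - sup (p - q) 0"
  by (simp add: diff_sup_eq_inf add_inf_distrib_left inf_commute)

lemma scaleR_le_sup_neg:
  fixes x :: "'e::{lattice_ab_group_add, ordered_real_vector}"
  assumes "\<bar>c\<bar> \<le> 1"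
  shows "c *\<^sub>R x \<le> sup x (- x)"
proof -
  let ?m = "sup x (- x)"
  have m0: "0 \<le> ?m" by (rule sup_neg_nonneg)
  show ?thesis
  proof (cases "0 \<le> c")
    case True
    have "c *\<^sub>R x \<le> c *\<^sub>R ?m" by (rule scaleR_left_mono) (auto simp: True)
    also have "\<dots> \<le> 1 *\<^sub>R ?m" by (rule scaleR_right_mono) (use assms m0 in auto)
    finally show ?thesis by simp
  next
    case False
    have "c *\<^sub>R x = (- c) *\<^sub>R (- x)" by simp
    also have "\<dots> \<le> (- c) *\<^sub>R ?m" by (rule scaleR_left_mono) (use False in auto)
    also have "\<dots> \<le> 1 *\<^sub>R ?m" by (rule scaleR_right_mono) (use assms m0 False in auto)
    finally show ?thesis by simp
  qed
qed

lemma modA_real: "modA K ((x::'e::{real_vector, lattice_ab_group_add, ordered_real_vector}), 0) = (sup x (- x), 0)"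
proof (cases K)
  case RealK then show ?thesis by (simp add: modA_def)
next
  case ComplexK
  let ?S = "{cos t *\<^sub>R x + sin t *\<^sub>R (0::'e) | t. 0 \<le> t \<and> t \<le> 2 * pi}"
  have sup: "is_sup_E ?S (sup x (- x))"
    unfolding is_sup_E_def
  proof (intro conjI allI impI ballI)
    fix y assume "y \<in> ?S"
    then obtain t where "y = cos t *\<^sub>R x" by auto
    then show "y \<le> sup x (- x)" by (simp add: scaleR_le_sup_neg)
  next
    fix u assume u: "\<forall>y\<in>?S. y \<le> u"
    have "x \<in> ?S" by (rule CollectI, rule exI[of _ 0]) simp
    moreover have "- x \<in> ?S" by (rule CollectI, rule exI[of _ pi]) simp
    ultimately show "sup x (- x) \<le> u" using u by auto
  qed
  have "(THE s. is_sup_E ?S s) = sup x (- x)"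
  proof (rule the_equality)
    show "is_sup_E ?S (sup x (- x))" by (rule sup)
  next
    fix s assume "is_sup_E ?S s"
    with sup show "s = sup x (- x)" unfolding is_sup_E_def by (meson order_antisym)
  qed
  then show ?thesis using ComplexK by (simp add: modA_def)
qed

lemma snd_modA: "snd (modA K f) = 0"
  by (simp add: modA_def)

lemma posA_iff: "z \<in> posA K \<longleftrightarrow> snd z = 0 \<and> 0 \<le> fst (z::'e::{real_vector, lattice_ab_group_add, ordered_real_vector} cpx)"
proof
  assume z: "z \<in> posA K"
  then have "modA K z = z" by (simp add: posA_def)
  then have s: "snd z = 0" using snd_modA[of K z] by simp
  obtain x where zx: "z = (x, 0)" using s by (cases z) auto
  from z have "(sup x (-x), 0) = (x, 0)" using modA_real[of K x] zx by (simp add: posA_def)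
  then have "0 \<le> x" using sup_neg_nonneg[of x] by simp
  then show "snd z = 0 \<and> 0 \<le> fst z" using zx by simp
next
  assume "snd z = 0 \<and> 0 \<le> fst z"
  then obtain x where zx: "z = (x, 0)" "0 \<le> x" by (cases z) auto
  then show "z \<in> posA K" by (simp add: posA_def inA_def modA_real sup_neg_id)
qed

lemma leA_iff: "leA K p q \<longleftrightarrow> snd p = snd q \<and> fst p \<le> fst (q::'e::{real_vector, lattice_ab_group_add, ordered_real_vector} cpx)"
  by (auto simp: leA_def posA_iff subA_def)

lemma is_infA_unique: "is_infA K S s1 \<Longrightarrow> is_infA K S s2 \<Longrightarrow> s1 = (s2::'e::{real_vector, lattice_ab_group_add, ordered_real_vector} cpx)"
  unfolding is_infA_def leA_iff by (metis order_antisym prod_eq_iff)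

lemma infA_eq: "is_infA K S s \<Longrightarrow> infA K S = (s::'e::{real_vector, lattice_ab_group_add, ordered_real_vector} cpx)"
  unfolding infA_def using is_infA_unique by blast

lemma smulA_real[simp]: "smulA (complex_of_real c) f = (c *\<^sub>R fst f, c *\<^sub>R snd f)"
  by (simp add: smulA_def)

lemma fa_mult_nonneg: "fa TYPE('e::{real_algebra_1, lattice_ab_group_add, ordered_real_vector}) \<Longrightarrow> 0 \<le> a \<Longrightarrow> 0 \<le> b \<Longrightarrow> 0 \<le> (a::'e) * b"
  unfolding fa_def by blast

lemma fa_disj: "fa TYPE('e::{real_algebra_1, lattice_ab_group_add, ordered_real_vector}) \<Longrightarrow> inf (a::'e) b = 0 \<Longrightarrow> 0 \<le> c \<Longrightarrow> inf (c * a) b = 0"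
  unfolding fa_def by blast

lemma fa_disj2: "fa TYPE('e::{real_algebra_1, lattice_ab_group_add, ordered_real_vector}) \<Longrightarrow> inf (a::'e) b = 0 \<Longrightarrow> 0 \<le> c \<Longrightarrow> inf (a * c) b = 0"
  unfolding fa_def by blast

lemma fa_arch: "fa TYPE('e::{real_algebra_1, lattice_ab_group_add, ordered_real_vector}) \<Longrightarrow> (\<And>n::nat. real n *\<^sub>R (x::'e) \<le> y) \<Longrightarrow> x \<le> 0"
  unfolding fa_def by blast

lemma fa_mult_inf:
  fixes c p q :: "'e::{real_algebra_1, lattice_ab_group_add, ordered_real_vector}"
  assumes F: "fa TYPE('e)" and c: "0 \<le> c"
  shows "c * inf p q = inf (c * p) (c * q)"
proof -
  let ?m = "inf p q"
  have e: "inf p q + (- ?m) = inf (p + - ?m) (q + - ?m)" by (rule add_inf_distrib_right)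
  have d: "inf (p - ?m) (q - ?m) = 0" unfolding diff_conv_add_uminus e[symmetric] by (rule right_minus)
  have "inf (c * (p - ?m)) (q - ?m) = 0" by (rule fa_disj[OF F d c])
  then have "inf (q - ?m) (c * (p - ?m)) = 0" by (simp add: inf_commute)
  from fa_disj[OF F this c] have "inf (c * (q - ?m)) (c * (p - ?m)) = 0" .
  then have "inf (c * q - c * ?m) (c * p - c * ?m) = 0" unfolding right_diff_distrib .
  moreover have e2: "inf (c * q) (c * p) + (- (c * ?m)) = inf (c * q + - (c * ?m)) (c * p + - (c * ?m))"
    by (rule add_inf_distrib_right)
  ultimately have "inf (c * q) (c * p) - c * ?m = 0" unfolding diff_conv_add_uminus e2 by blast
  then show ?thesis by (simp add: inf_commute)
qed

lemma pn_disj: "inf (sup (x::'e::lattice_ab_group_add) 0) (sup (- x) 0) = 0"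
proof -
  let ?u = "sup x 0" and ?v = "sup (- x) 0"
  have "?u + ?v = sup ?u ?v + inf ?u ?v" by (rule add_eq_inf_sup)
  moreover have "?u + ?v = sup x (- x)"
    using abs_prts'[of x] by (simp add: neg_inf_eq_sup[symmetric])
  moreover have "sup ?u ?v = sup x (- x)"
    using sup_neg_nonneg[of x] by (metis sup_absorb1 sup_assoc sup_commute sup_left_idem)
  ultimately show ?thesis by simp
qed

lemma fa_one_nonneg:
  assumes F: "fa TYPE('e::{real_algebra_1, lattice_ab_group_add, ordered_real_vector})"
  shows "0 \<le> (1::'e)"
proof -
  let ?p = "sup (1::'e) 0" and ?n = "sup (- (1::'e)) 0"
  have pn: "inf ?p ?n = 0" by (rule pn_disj)
  have n0: "0 \<le> ?n" by simp
  have np: "?n * ?p = 0"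
  proof -
    have a: "inf (?n * ?p) ?n = 0" by (rule fa_disj[OF F _ n0]) (simp add: pn)
    have "inf (?n * ?p) (?n * ?p) = 0"
    proof -
      have "inf ?n (?n * ?p) = 0" using a by (simp add: inf_commute)
      from fa_disj2[OF F this] have "\<And>c. 0 \<le> c \<Longrightarrow> inf (?n * c) (?n * ?p) = 0" .
      from this[of ?p] show ?thesis by simp
    qed
    then show ?thesis by simp
  qed
  have one: "(1::'e) = ?p - ?n"
  proof -
    have h1: "1 = ?p + inf 1 0" using prts[of "1::'e"] by (simp only: pprt_def nprt_def)
    have h2: "inf (1::'e) 0 = - ?n" by (simp add: neg_inf_eq_sup[symmetric])
    show ?thesis unfolding diff_conv_add_uminus h2[symmetric] by (rule h1)
  qed
  have "?n = ?n * 1" by simp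
  also have "\<dots> = ?n * (?p - ?n)" using one by (rule arg_cong)
  also have "\<dots> = ?n * ?p - ?n * ?n" by (rule right_diff_distrib)
  also have "\<dots> = - (?n * ?n)" using np by simp
  finally have "?n \<le> 0" using fa_mult_nonneg[OF F n0 n0] by (metis neg_le_0_iff_le)
  then have "?n = 0" using n0 by (rule antisym)
  then have "(1::'e) = ?p" using one by simp
  then show ?thesis by (metis sup_ge2)
qed

lemma fa_pow_nonneg: "fa TYPE('e::{real_algebra_1, lattice_ab_group_add, ordered_real_vector}) \<Longrightarrow> 0 \<le> (x::'e) \<Longrightarrow> 0 \<le> x ^ n"
  by (induction n) (auto simp: fa_one_nonneg fa_mult_nonneg)

lemma fa_arch_eps:
  fixes w P z :: "'e::{real_algebra_1, lattice_ab_group_add, ordered_real_vector}"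
  assumes F: "fa TYPE('e)" and z: "0 \<le> z" and h: "\<And>\<epsilon>. 0 < \<epsilon> \<Longrightarrow> w \<le> P + \<epsilon> *\<^sub>R z"
  shows "w \<le> P"
proof -
  have "w - P \<le> 0"
  proof (rule fa_arch[OF F])
    fix n :: nat
    show "real n *\<^sub>R (w - P) \<le> z"
    proof (cases "n = 0")
      case True then show ?thesis using z by simp
    next
      case False
      then have np: "0 < real n" by simp
      have "w - P \<le> (1 / real n) *\<^sub>R z" using h[of "1 / real n"] np by (simp add: algebra_simps)
      then have "real n *\<^sub>R (w - P) \<le> real n *\<^sub>R ((1 / real n) *\<^sub>R z)"
        by (rule scaleR_left_mono) simp
      then show ?thesis using np by simp
    qed
  qed
  then show ?thesis by simp
qed

fun finf :: "(nat \<Rightarrow> 'a::semilattice_inf) \<Rightarrow> nat \<Rightarrow> 'a" where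
  "finf f 0 = f 0"
| "finf f (Suc n) = inf (finf f n) (f (Suc n))"

lemma finf_le: "k \<le> N \<Longrightarrow> finf f N \<le> f k"
proof (induction N)
  case 0 then show ?case by simp
next
  case (Suc N) then show ?case by (cases "k = Suc N") (auto intro: le_infI1)
qed

lemma finf_mult: "fa TYPE('e::{real_algebra_1, lattice_ab_group_add, ordered_real_vector}) \<Longrightarrow> 0 \<le> (c::'e) \<Longrightarrow> c * finf f N = finf (\<lambda>k. c * f k) N"
  by (induction N) (auto simp: fa_mult_inf)


lemma finf_greatest: "(\<And>k. k \<le> N \<Longrightarrow> l \<le> f k) \<Longrightarrow> l \<le> finf f N"
  by (induction N) auto

definition valid :: "real \<Rightarrow> real \<Rightarrow> real \<Rightarrow> bool" where
  "valid s t1 t2 \<longleftrightarrow> 0 < t1 \<and> 0 < t2 \<and> t1 powr s * t2 powr (1 - s) = 1"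

definition phi :: "real \<Rightarrow> real \<Rightarrow> real" where
  "phi s t = (t powr (- s)) powr (1 / (1 - s))"

lemma valid_phi:
  assumes "0 < s" "s < 1" "0 < t" shows "valid s t (phi s t)"
proof -
  have "phi s t powr (1 - s) = (t powr (- s)) powr (1 / (1 - s) * (1 - s))"
    unfolding phi_def by (simp add: powr_powr)
  also have "\<dots> = t powr (- s)" using assms by simp
  finally have "t powr s * phi s t powr (1 - s) = t powr s * t powr (- s)" by simp
  also have "\<dots> = 1" using assms by (simp add: powr_add[symmetric])
  finally show ?thesis using assms by (simp add: valid_def phi_def)
qed

lemma valid_anti:
  assumes s: "0 < s" "s < 1" and a: "valid s a1 a2" and b: "valid s b1 b2" and le: "a1 \<le> b1"
  shows "b2 \<le> a2"
proof (rule ccontr)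
  assume "\<not> b2 \<le> a2"
  then have lt: "a2 < b2" by simp
  have "a1 powr s \<le> b1 powr s" using a le s by (intro powr_mono2) (auto simp: valid_def)
  moreover have "a2 powr (1 - s) < b2 powr (1 - s)" using a lt s by (intro powr_less_mono2) (auto simp: valid_def)
  moreover have "0 < a1 powr s" using a by (simp add: valid_def)
  moreover have "0 < a2 powr (1 - s)" using a by (simp add: valid_def)
  ultimately have "a1 powr s * a2 powr (1 - s) < b1 powr s * b2 powr (1 - s)"
    by (meson mult_le_less_imp_less less_le_not_le)
  then show False using a b by (simp add: valid_def)
qed

lemma grid_exists:
  assumes s: "0 < s" "s < 1" and d: "0 < \<delta>"
  shows "\<exists>N::nat. \<forall>t1 t2. valid s t1 t2 \<longrightarrow>
           (\<exists>k\<le>N. real (Suc k) * \<delta> \<le> t1 + \<delta> \<and> phi s (real (Suc k) * \<delta>) \<le> t2 + \<delta>)"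
proof -
  define X where "X = \<delta> powr ((s - 1) / s)"
  have X0: "0 < X" using d by (simp add: X_def)
  have vX: "valid s X \<delta>"
  proof -
    have "X powr s = \<delta> powr ((s - 1) / s * s)" unfolding X_def by (simp add: powr_powr)
    also have "\<dots> = \<delta> powr (s - 1)" using s by simp
    finally have "X powr s * \<delta> powr (1 - s) = \<delta> powr (s - 1) * \<delta> powr (1 - s)" by simp
    also have "\<dots> = 1" using d by (simp add: powr_add[symmetric])
    finally show ?thesis using X0 d by (simp add: valid_def)
  qed
  define N where "N = nat \<lceil>X / \<delta>\<rceil>"
  have NX: "X \<le> real N * \<delta>"
  proof -
    have "X / \<delta> \<le> real N" unfolding N_def by (rule real_nat_ceiling_ge)
    then show ?thesis using d by (simp add: field_simps)
  qed
  show ?thesis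
  proof (rule exI[of _ N], intro allI impI)
    fix t1 t2 assume v: "valid s t1 t2"
    then have t1: "0 < t1" and t2: "0 < t2" by (auto simp: valid_def)
    show "\<exists>k\<le>N. real (Suc k) * \<delta> \<le> t1 + \<delta> \<and> phi s (real (Suc k) * \<delta>) \<le> t2 + \<delta>"
    proof (cases "t1 \<le> real (Suc N) * \<delta>")
      case True
      define m where "m = nat \<lceil>t1 / \<delta>\<rceil>"
      have q0: "0 < t1 / \<delta>" using t1 d by simp
      have m1: "1 \<le> m" unfolding m_def using q0 by linarith
      have mge: "t1 / \<delta> \<le> real m" unfolding m_def by (rule real_nat_ceiling_ge)
      have mlt: "real m < t1 / \<delta> + 1" unfolding m_def using q0 by linarith
      have mN: "m \<le> Suc N"
      proof -
        have "t1 / \<delta> \<le> real (Suc N)" using True d by (simp add: field_simps)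
        then show ?thesis unfolding m_def
          by (metis ceiling_le ceiling_of_nat nat_le_iff of_int_of_nat_eq of_nat_le_iff)
      qed
      define k where "k = m - 1"
      have km: "Suc k = m" using m1 by (simp add: k_def)
      have p1: "t1 \<le> real m * \<delta>" using mge d by (simp add: field_simps)
      have p2: "real m * \<delta> \<le> t1 + \<delta>" using mlt d by (simp add: field_simps)
      have p0: "0 < real m * \<delta>" using m1 d by simp
      have "phi s (real m * \<delta>) \<le> t2"
        by (rule valid_anti[OF s v valid_phi[OF s p0] p1])
      then show ?thesis using km p2 mN t2 d by (intro exI[of _ k]) (auto simp: k_def)
    next
      case False
      have p0: "0 < real (Suc N) * \<delta>" using d by simp
      have "X \<le> real (Suc N) * \<delta>" using NX d by (simp add: distrib_right)
      then have "phi s (real (Suc N) * \<delta>) \<le> \<delta>"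
        by (rule valid_anti[OF s vX valid_phi[OF s p0]])
      then show ?thesis using False t2 d by (intro exI[of _ N]) auto
    qed
  qed
qed

definition gridN :: "real \<Rightarrow> real \<Rightarrow> nat" where
  "gridN s \<delta> = (SOME N. \<forall>t1 t2. valid s t1 t2 \<longrightarrow>
           (\<exists>k\<le>N. real (Suc k) * \<delta> \<le> t1 + \<delta> \<and> phi s (real (Suc k) * \<delta>) \<le> t2 + \<delta>))"

lemma gridN:
  assumes "0 < s" "s < 1" "0 < \<delta>" "valid s t1 t2"
  shows "\<exists>k\<le>gridN s \<delta>. real (Suc k) * \<delta> \<le> t1 + \<delta> \<and> phi s (real (Suc k) * \<delta>) \<le> t2 + \<delta>"
proof -
  from someI_ex[OF grid_exists[OF assms(1-3)]] show ?thesis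
    unfolding gridN_def using assms(4) by blast
qed

definition Gf :: "real \<Rightarrow> 'e::real_vector \<Rightarrow> 'e \<Rightarrow> real \<Rightarrow> real \<Rightarrow> 'e" where
  "Gf s u v t1 t2 = (s * t1) *\<^sub>R u + ((1 - s) * t2) *\<^sub>R v"

abbreviation grid1 :: "real \<Rightarrow> nat \<Rightarrow> real" where "grid1 \<delta> k \<equiv> real (Suc k) * \<delta>"

lemma approx:
  fixes u v :: "'e::{lattice_ab_group_add, ordered_real_vector}"
  assumes s: "0 < s" "s < 1" and e: "0 < \<epsilon>" and u: "0 \<le> u" and v: "0 \<le> v" and vt: "valid s t1 t2"
  shows "finf (\<lambda>k. Gf s u v (grid1 \<epsilon> k) (phi s (grid1 \<epsilon> k))) (gridN s \<epsilon>) - \<epsilon> *\<^sub>R (u + v)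
           \<le> Gf s u v t1 t2"
proof -
  obtain k where k: "k \<le> gridN s \<epsilon>" and k1: "grid1 \<epsilon> k \<le> t1 + \<epsilon>"
    and k2: "phi s (grid1 \<epsilon> k) \<le> t2 + \<epsilon>"
    using gridN[OF s e vt] by blast
  let ?p = "grid1 \<epsilon> k" and ?q = "phi s (grid1 \<epsilon> k)"
  have "finf (\<lambda>k. Gf s u v (grid1 \<epsilon> k) (phi s (grid1 \<epsilon> k))) (gridN s \<epsilon>) - \<epsilon> *\<^sub>R (u + v)
        \<le> Gf s u v ?p ?q - \<epsilon> *\<^sub>R (u + v)"
    using finf_le[OF k] by (rule diff_right_mono)
  also have "\<dots> = (s * ?p - \<epsilon>) *\<^sub>R u + ((1 - s) * ?q - \<epsilon>) *\<^sub>R v"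
    unfolding Gf_def scaleR_diff_left scaleR_add_right by (simp add: diff_add_eq diff_diff_eq add_diff_eq ac_simps)
  also have "\<dots> \<le> (s * t1) *\<^sub>R u + ((1 - s) * t2) *\<^sub>R v"
  proof (rule add_mono)
    have "s * ?p \<le> s * (t1 + \<epsilon>)" using k1 s by (intro mult_left_mono) auto
    moreover have "s * \<epsilon> \<le> 1 * \<epsilon>" by (rule mult_right_mono) (use s e in auto)
    ultimately have "s * ?p - \<epsilon> \<le> s * t1" by (simp add: distrib_left)
    then show "(s * ?p - \<epsilon>) *\<^sub>R u \<le> (s * t1) *\<^sub>R u" using u by (rule scaleR_right_mono)
  next
    have "(1 - s) * ?q \<le> (1 - s) * (t2 + \<epsilon>)" using k2 s by (intro mult_left_mono) auto
    moreover have "(1 - s) * \<epsilon> \<le> 1 * \<epsilon>" by (rule mult_right_mono) (use s e in auto)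
    ultimately have "(1 - s) * ?q - \<epsilon> \<le> (1 - s) * t2" by (simp add: distrib_left)
    then show "((1 - s) * ?q - \<epsilon>) *\<^sub>R v \<le> ((1 - s) * t2) *\<^sub>R v" using v by (rule scaleR_right_mono)
  qed
  also have "\<dots> = Gf s u v t1 t2" by (simp add: Gf_def)
  finally show ?thesis .
qed


definition glb :: "'a::order set \<Rightarrow> 'a \<Rightarrow> bool" where
  "glb S g \<longleftrightarrow> (\<forall>y\<in>S. g \<le> y) \<and> (\<forall>l. (\<forall>y\<in>S. l \<le> y) \<longrightarrow> l \<le> g)"

definition Fs :: "real \<Rightarrow> 'e::{real_algebra_1} \<Rightarrow> 'e set" where
  "Fs s x = {Gf s x 1 t1 t2 | t1 t2. valid s t1 t2}"

lemma mainE: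
  fixes x g :: "'e::{real_algebra_1, lattice_ab_group_add, ordered_real_vector}"
  assumes F: "fa TYPE('e)" and x: "0 \<le> x" and s: "0 < s" "s < 1" and g: "glb (Fs s x) g"
  shows "\<And>t1 t2. valid s t1 t2 \<Longrightarrow> x ^ n * g \<le> x ^ n * Gf s x 1 t1 t2"
    and "\<And>\<epsilon>. 0 < \<epsilon> \<Longrightarrow> finf (\<lambda>k. x ^ n * Gf s x 1 (grid1 \<epsilon> k) (phi s (grid1 \<epsilon> k))) (gridN s \<epsilon>)
            \<le> x ^ n * g + \<epsilon> *\<^sub>R (x ^ n * x + x ^ n)"
    and "\<And>l. (\<And>t1 t2. valid s t1 t2 \<Longrightarrow> l \<le> x ^ n * Gf s x 1 t1 t2) \<Longrightarrow> l \<le> x ^ n * g"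
proof -
  have xn: "0 \<le> x ^ n" using fa_pow_nonneg[OF F x] .
  have one: "0 \<le> (1::'e)" using fa_one_nonneg[OF F] .
  have mono: "x ^ n * p \<le> x ^ n * q" if "p \<le> q" for p q
  proof -
    have "0 \<le> x ^ n * (q - p)" using fa_mult_nonneg[OF F xn] that by simp
    then show ?thesis by (simp add: right_diff_distrib)
  qed
  show i: "x ^ n * g \<le> x ^ n * Gf s x 1 t1 t2" if "valid s t1 t2" for t1 t2
    using g that by (intro mono) (auto simp: glb_def Fs_def)
  show ii: "finf (\<lambda>k. x ^ n * Gf s x 1 (grid1 \<epsilon> k) (phi s (grid1 \<epsilon> k))) (gridN s \<epsilon>)
            \<le> x ^ n * g + \<epsilon> *\<^sub>R (x ^ n * x + x ^ n)" if e: "0 < \<epsilon>" for \<epsilon>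
  proof -
    let ?h = "finf (\<lambda>k. Gf s x 1 (grid1 \<epsilon> k) (phi s (grid1 \<epsilon> k))) (gridN s \<epsilon>) - \<epsilon> *\<^sub>R (x + 1)"
    have lb: "\<forall>y\<in>Fs s x. ?h \<le> y" using approx[OF s e x one] by (auto simp: Fs_def)
    have "?h \<le> g" using g lb unfolding glb_def by blast
    then have "x ^ n * ?h \<le> x ^ n * g" by (rule mono)
    moreover have "x ^ n * ?h = finf (\<lambda>k. x ^ n * Gf s x 1 (grid1 \<epsilon> k) (phi s (grid1 \<epsilon> k))) (gridN s \<epsilon>)
         - \<epsilon> *\<^sub>R (x ^ n * x + x ^ n)"
      by (simp add: right_diff_distrib finf_mult[OF F xn] distrib_left)
    ultimately show ?thesis by (simp add: diff_le_eq)
  qed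
  show "l \<le> x ^ n * g" if l: "\<And>t1 t2. valid s t1 t2 \<Longrightarrow> l \<le> x ^ n * Gf s x 1 t1 t2" for l
  proof (rule fa_arch_eps[OF F])
    show "0 \<le> x ^ n * x + x ^ n" using fa_mult_nonneg[OF F xn x] xn by simp
  next
    fix \<epsilon> :: real assume e: "0 < \<epsilon>"
    have "l \<le> finf (\<lambda>k. x ^ n * Gf s x 1 (grid1 \<epsilon> k) (phi s (grid1 \<epsilon> k))) (gridN s \<epsilon>)"
    proof (rule finf_greatest)
      fix k
      have "0 < grid1 \<epsilon> k" using e by simp
      then show "l \<le> x ^ n * Gf s x 1 (grid1 \<epsilon> k) (phi s (grid1 \<epsilon> k))"
        by (intro l valid_phi[OF s])
    qed
    also have "\<dots> \<le> x ^ n * g + \<epsilon> *\<^sub>R (x ^ n * x + x ^ n)" by (rule ii[OF e])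
    finally show "l \<le> x ^ n * g + \<epsilon> *\<^sub>R (x ^ n * x + x ^ n)" .
  qed
qed


definition tau :: "('a::zero cpx \<Rightarrow> 'b cpx) \<Rightarrow> 'a \<Rightarrow> 'b" where
  "tau T z = fst (T (z, 0))"


lemma real_in_scalars: "complex_of_real c \<in> scalars K"
  by (cases K) (auto simp: scalars_def)

context
  fixes K :: scalar_field
    and C :: "'a::{real_algebra_1, lattice_ab_group_add, ordered_real_vector} cpx set"
    and T :: "'a cpx \<Rightarrow> 'b::{real_algebra_1, lattice_ab_group_add, ordered_real_vector} cpx"
  assumes PS: "Phi_subalgebra K C" and MV: "mult_vl_hom K C T"
begin

lemma C_zero: "(0, 0) \<in> C" using PS by (simp add: Phi_subalgebra_def)

lemma C_add: "(p, 0) \<in> C \<Longrightarrow> (q, 0) \<in> C \<Longrightarrow> (p + q, 0) \<in> C \<and> T (p + q, 0) = addA (T (p, 0)) (T (q, 0))"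
  using PS MV unfolding Phi_subalgebra_def mult_vl_hom_def
  by (metis (no_types, lifting) addA_def add_0 fst_conv snd_conv)

lemma C_scale: "(p, 0) \<in> C \<Longrightarrow> (c *\<^sub>R p, 0) \<in> C \<and> T (c *\<^sub>R p, 0) = smulA (complex_of_real c) (T (p, 0))"
proof -
  assume p: "(p, 0) \<in> C"
  have e: "smulA (complex_of_real c) (p, 0) = (c *\<^sub>R p, 0)" by simp
  show ?thesis using PS MV p real_in_scalars[of c K] unfolding Phi_subalgebra_def mult_vl_hom_def
    by (metis e)
qed

lemma C_mult: "(p, 0) \<in> C \<Longrightarrow> (q, 0) \<in> C \<Longrightarrow> (p * q, 0) \<in> C \<and> T (p * q, 0) = mulA (T (p, 0)) (T (q, 0))"
proof -
  assume p: "(p, 0) \<in> C" and q: "(q, 0) \<in> C"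
  have e: "mulA (p, 0) (q, 0) = (p * q, 0)" by (simp add: mulA_def)
  show ?thesis using PS MV p q unfolding Phi_subalgebra_def mult_vl_hom_def by (metis e)
qed

lemma C_sup: "(p, 0) \<in> C \<Longrightarrow> (q, 0) \<in> C \<Longrightarrow> (sup p q, 0) \<in> C"
  using PS unfolding Phi_subalgebra_def by blast

lemma C_inf: "(p, 0) \<in> C \<Longrightarrow> (q, 0) \<in> C \<Longrightarrow> (inf p q, 0) \<in> C"
  using PS unfolding Phi_subalgebra_def by blast

lemma T_mod: "(p, 0) \<in> C \<Longrightarrow> T (sup p (- p), 0) = modA K (T (p, 0))"
  using MV unfolding mult_vl_hom_def by (metis modA_real)

lemma T_pos_snd: "(w, 0) \<in> C \<Longrightarrow> 0 \<le> w \<Longrightarrow> snd (T (w, 0)) = 0"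
  using T_mod[of w] snd_modA[of K "T (w, 0)"] by (simp add: sup_neg_id)

lemma T_snd: "(z, 0) \<in> C \<Longrightarrow> T (z, 0) = (tau T z, 0)"
proof -
  assume z: "(z, 0) \<in> C"
  have p: "(sup z 0, 0) \<in> C" by (rule C_sup[OF z C_zero])
  have i: "(inf z 0, 0) \<in> C" by (rule C_inf[OF z C_zero])
  define w where "w = (-1) *\<^sub>R inf z 0"
  have wC: "(w, 0) \<in> C" using C_scale[OF i, of "-1"] unfolding w_def by blast
  have w0: "0 \<le> w" unfolding w_def by simp
  have ww: "inf z 0 = (-1) *\<^sub>R w" unfolding w_def by simp
  have "T (inf z 0, 0) = smulA (complex_of_real (-1)) (T (w, 0))"
    unfolding ww using C_scale[OF wC, of "-1"] by blast
  then have s1: "snd (T (inf z 0, 0)) = 0" using T_pos_snd[OF wC w0] by (simp add: smulA_def)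
  have s2: "snd (T (sup z 0, 0)) = 0" using T_pos_snd[OF p] by simp
  have "z = sup z 0 + inf z 0" using prts[of z] by (simp only: pprt_def nprt_def)
  then have "T (z, 0) = addA (T (sup z 0, 0)) (T (inf z 0, 0))" using C_add[OF p i] by metis
  then have "snd (T (z, 0)) = 0" using s1 s2 by (simp add: addA_def)
  then show ?thesis by (simp add: tau_def prod_eq_iff)
qed

lemma tau_add: "(p, 0) \<in> C \<Longrightarrow> (q, 0) \<in> C \<Longrightarrow> tau T (p + q) = tau T p + tau T q"
proof -
  assume p: "(p, 0) \<in> C" and q: "(q, 0) \<in> C"
  have "T (p + q, 0) = addA (T (p, 0)) (T (q, 0))" using C_add[OF p q] by blast
  then show ?thesis by (simp add: tau_def addA_def)
qed

lemma tau_scale: "(p, 0) \<in> C \<Longrightarrow> tau T (c *\<^sub>R p) = c *\<^sub>R tau T p"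
proof -
  assume p: "(p, 0) \<in> C"
  have "T (c *\<^sub>R p, 0) = smulA (complex_of_real c) (T (p, 0))" using C_scale[OF p] by blast
  then show ?thesis by (simp add: tau_def)
qed

lemma C_diff: "(p, 0) \<in> C \<Longrightarrow> (q, 0) \<in> C \<Longrightarrow> (p - q, 0) \<in> C \<and> tau T (p - q) = tau T p - tau T q"
proof -
  assume p: "(p, 0) \<in> C" and q: "(q, 0) \<in> C"
  have q': "((-1) *\<^sub>R q, 0) \<in> C" using C_scale[OF q] by blast
  have "p - q = p + (-1) *\<^sub>R q" by simp
  then show ?thesis using C_add[OF p q'] tau_add[OF p q'] tau_scale[OF q, of "-1"] by simp
qed

lemma tau_mult: "(p, 0) \<in> C \<Longrightarrow> (q, 0) \<in> C \<Longrightarrow> tau T (p * q) = tau T p * tau T q"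
proof -
  assume p: "(p, 0) \<in> C" and q: "(q, 0) \<in> C"
  have "T (p * q, 0) = mulA (T (p, 0)) (T (q, 0))" using C_mult[OF p q] by blast
  also have "\<dots> = mulA (tau T p, 0) (tau T q, 0)" by (simp only: T_snd[OF p] T_snd[OF q])
  finally have "T (p * q, 0) = (tau T p * tau T q, 0)" by (simp add: mulA_def)
  then show ?thesis by (simp only: tau_def[of T "p * q"] fst_conv)
qed

lemma tau_abs: "(p, 0) \<in> C \<Longrightarrow> tau T (sup p (- p)) = sup (tau T p) (- tau T p)"
proof -
  assume p: "(p, 0) \<in> C"
  have "T (sup p (- p), 0) = modA K (T (p, 0))" by (rule T_mod[OF p])
  also have "\<dots> = modA K (tau T p, 0)" by (simp only: T_snd[OF p])
  finally have "T (sup p (- p), 0) = (sup (tau T p) (- tau T p), 0)" by (simp only: modA_real)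
  then show ?thesis by (simp only: tau_def[of T "sup p (- p)"] fst_conv)
qed

lemma C_neg: "(p, 0) \<in> C \<Longrightarrow> (- p, 0) \<in> C"
  using C_scale[of p "-1"] by simp

lemma tau_sup0: "(p, 0) \<in> C \<Longrightarrow> tau T (sup p 0) = sup (tau T p) 0"
proof -
  assume p: "(p, 0) \<in> C"
  have s: "(sup p 0, 0) \<in> C" by (rule C_sup[OF p C_zero])
  have a: "(sup p (- p), 0) \<in> C" by (rule C_sup[OF p C_neg[OF p]])
  have "tau T (sup p 0) + tau T (sup p 0) = tau T (sup p 0 + sup p 0)" using tau_add[OF s s] by simp
  also have "\<dots> = tau T (p + sup p (- p))" by (simp only: pos_double)
  also have "\<dots> = tau T p + sup (tau T p) (- tau T p)" using tau_add[OF p a] tau_abs[OF p] by simp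
  also have "\<dots> = sup (tau T p) 0 + sup (tau T p) 0" by (simp only: pos_double)
  finally show ?thesis by (rule double_cancel)
qed

lemma tau_inf: "(p, 0) \<in> C \<Longrightarrow> (q, 0) \<in> C \<Longrightarrow> tau T (inf p q) = inf (tau T p) (tau T q)"
proof -
  assume p: "(p, 0) \<in> C" and q: "(q, 0) \<in> C"
  have d: "(p - q, 0) \<in> C" using C_diff[OF p q] by blast
  have s: "(sup (p - q) 0, 0) \<in> C" by (rule C_sup[OF d C_zero])
  have "tau T (inf p q) = tau T (p - sup (p - q) 0)" by (simp only: inf_via_sup)
  also have "\<dots> = tau T p - sup (tau T p - tau T q) 0"
    using C_diff[OF p s] tau_sup0[OF d] C_diff[OF p q] by simp
  also have "\<dots> = inf (tau T p) (tau T q)" by (simp only: inf_via_sup)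
  finally show ?thesis .
qed

lemma tau_mono: "(p, 0) \<in> C \<Longrightarrow> (q, 0) \<in> C \<Longrightarrow> p \<le> q \<Longrightarrow> tau T p \<le> tau T q"
proof -
  assume p: "(p, 0) \<in> C" and q: "(q, 0) \<in> C" and le: "p \<le> q"
  have d: "(q - p, 0) \<in> C" using C_diff[OF q p] by blast
  have eq: "sup (q - p) 0 = q - p" using le by (simp add: sup_absorb1)
  have "tau T (sup (q - p) 0) = sup (tau T (q - p)) 0" by (rule tau_sup0[OF d])
  then have "tau T (q - p) = sup (tau T (q - p)) 0" unfolding eq .
  then have "0 \<le> tau T (q - p)" by (metis sup.cobounded2)
  then have "0 \<le> tau T q - tau T p" using C_diff[OF q p] by simp
  then show ?thesis by simp
qed

lemma tau_finf: "(\<And>k. k \<le> N \<Longrightarrow> (f k, 0) \<in> C) \<Longrightarrow> (finf f N, 0) \<in> C \<and> tau T (finf f N) = finf (\<lambda>k. tau T (f k)) N"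
proof (induction N)
  case 0 then show ?case by simp
next
  case (Suc N)
  then have ih: "(finf f N, 0) \<in> C" "tau T (finf f N) = finf (\<lambda>k. tau T (f k)) N" by auto
  have fs: "(f (Suc N), 0) \<in> C" using Suc.prems by simp
  show ?case using C_inf[OF ih(1) fs] tau_inf[OF ih(1) fs] ih(2) by simp
qed

lemma C_pow: "T unitA = unitA \<Longrightarrow> (x, 0) \<in> C \<Longrightarrow> (x ^ n, 0) \<in> C \<and> tau T (x ^ n) = tau T x ^ n"
proof (induction n)
  case 0
  then show ?case using PS by (simp add: Phi_subalgebra_def unitA_def tau_def)
next
  case (Suc n)
  then show ?case using C_mult[of x "x ^ n"] tau_mult[of x "x ^ n"] by simp
qed

lemma C_Gf: "T unitA = unitA \<Longrightarrow> (x, 0) \<in> C \<Longrightarrow> (Gf s x 1 t1 t2, 0) \<in> C \<and> tau T (Gf s x 1 t1 t2) = Gf s (tau T x) 1 t1 t2"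
proof -
  assume u: "T unitA = unitA" and x: "(x, 0) \<in> C"
  have one: "(1, 0) \<in> C" using PS by (simp add: Phi_subalgebra_def unitA_def)
  have t1: "tau T 1 = 1" using u by (simp add: tau_def unitA_def)
  have a: "((s * t1) *\<^sub>R x, 0) \<in> C" using C_scale[OF x] by blast
  have b: "(((1 - s) * t2) *\<^sub>R 1, 0) \<in> C" using C_scale[OF one] by blast
  show ?thesis unfolding Gf_def
    using C_add[OF a b] tau_add[OF a b] tau_scale[OF x] tau_scale[OF one] t1 by simp
qed

end


lemma powA_nat_real: "powA_nat ((x::'e::{real_algebra_1}), 0) n = (x ^ n, 0)"
  by (induction n) (simp_all add: powA_nat_def unitA_def mulA_def)

lemma is_infA_img:
  fixes S :: "'e::{real_vector, lattice_ab_group_add, ordered_real_vector} set"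
  assumes i: "is_infA K ((\<lambda>y. (y, 0)) ` S) s0" and ne: "S \<noteq> {}"
  shows "s0 = (fst s0, 0) \<and> glb S (fst s0)"
proof -
  obtain y where y: "y \<in> S" using ne by blast
  have "leA K s0 (y, 0)" using i y unfolding is_infA_def by blast
  then have sn: "snd s0 = 0" by (simp add: leA_iff)
  have lb: "\<forall>z\<in>S. fst s0 \<le> z" using i unfolding is_infA_def by (auto simp: leA_iff)
  have gr: "l \<le> fst s0" if "\<forall>z\<in>S. l \<le> z" for l
  proof -
    have "inA K (l, 0)" by (simp add: inA_def)
    moreover have "\<forall>w\<in>(\<lambda>y. (y, 0)) ` S. leA K (l, 0) w" using that by (auto simp: leA_iff)
    ultimately have "leA K (l, 0) s0" using i unfolding is_infA_def by blast
    then show ?thesis by (simp add: leA_iff)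
  qed
  show ?thesis using sn lb gr by (auto simp: glb_def prod_eq_iff)
qed

lemma Fs_ne: "Fs s x \<noteq> {}"
proof -
  have "Gf s x 1 1 1 \<in> Fs s x" unfolding Fs_def valid_def
    by (rule CollectI, rule exI[of _ 1], rule exI[of _ 1]) simp
  then show ?thesis by blast
qed


lemma powA_char:
  fixes x :: "'e::{real_algebra_1, lattice_ab_group_add, ordered_real_vector}"
  assumes PA: "Phi_algebra K TYPE('e)" and W: "wgm_closed K TYPE('e)" and x: "0 \<le> x"
  shows "r - of_int \<lfloor>r\<rfloor> = 0 \<Longrightarrow> powA K (x, 0) r = (x ^ nat \<lfloor>r\<rfloor>, 0)"
    and "r - of_int \<lfloor>r\<rfloor> \<noteq> 0 \<Longrightarrow> \<exists>g. glb (Fs (r - of_int \<lfloor>r\<rfloor>) x) g \<and> powA K (x, 0) r = (x ^ nat \<lfloor>r\<rfloor> * g, 0)"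
proof -
  have F: "fa TYPE('e)" by (rule Phi_fa[OF PA])
  have one: "0 \<le> (1::'e)" by (rule fa_one_nonneg[OF F])
  show "r - of_int \<lfloor>r\<rfloor> = 0 \<Longrightarrow> powA K (x, 0) r = (x ^ nat \<lfloor>r\<rfloor>, 0)"
    by (simp add: powA_def Let_def powA_nat_real mulA_def unitA_def)
  assume sne: "r - of_int \<lfloor>r\<rfloor> \<noteq> 0"
  define s where "s = r - of_int \<lfloor>r\<rfloor>"
  have s0: "0 < s" using sne unfolding s_def by (smt (verit) of_int_floor_le)
  have s1: "s < 1" unfolding s_def by linarith
  let ?Sp = "{addA (smulA (complex_of_real (s * \<theta>1)) (x, 0))
                           (smulA (complex_of_real ((1 - s) * \<theta>2)) unitA) | \<theta>1 \<theta>2.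
                      0 < \<theta>1 \<and> 0 < \<theta>2 \<and> \<theta>1 powr s * \<theta>2 powr (1 - s) = (1::real)}"
  have el: "addA (smulA (complex_of_real (s * t1)) (x, 0)) (smulA (complex_of_real ((1 - s) * t2)) unitA)
      = (Gf s x 1 t1 t2, 0)" for t1 t2
    by (simp only: smulA_real) (simp add: addA_def unitA_def Gf_def)
  have Sp: "?Sp = (\<lambda>y. (y, 0)) ` Fs s x"
    unfolding el unfolding Fs_def valid_def by blast
  define f :: "nat \<Rightarrow> 'e cpx" where "f = (\<lambda>k. if k = 0 then (x, 0) else unitA)"
  define rr :: "nat \<Rightarrow> real" where "rr = (\<lambda>k. if k = 0 then s else 1 - s)"
  have hyp: "(\<forall>k<2. inA K (f k)) \<and> (\<forall>k<2. 0 < rr k \<and> rr k < 1) \<and> (\<Sum>k<2. rr k) = 1"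
    using s0 s1 by (auto simp: f_def rr_def inA_def unitA_def numeral_2_eq_2)
  obtain s0' where inf: "is_infA K {sumA (\<lambda>k. smulA (complex_of_real (rr k * \<theta> k)) (modA K (f k))) 2 | \<theta>.
                          (\<forall>k<2. 0 < \<theta> k) \<and> (\<Prod>k<2. \<theta> k powr rr k) = 1} s0'"
    using W hyp unfolding wgm_closed_def by blast
  have mf0: "modA K (f 0) = (x, 0)" by (simp add: f_def modA_real sup_neg_id x)
  have mf1: "modA K (f 1) = (1, 0)" by (simp add: f_def modA_real sup_neg_id one unitA_def)
  have Sw: "{sumA (\<lambda>k. smulA (complex_of_real (rr k * \<theta> k)) (modA K (f k))) 2 | \<theta>.
                          (\<forall>k<2. 0 < \<theta> k) \<and> (\<Prod>k<2. \<theta> k powr rr k) = 1} = (\<lambda>y. (y, 0)) ` Fs s x"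
  proof (intro equalityI subsetI)
    fix z assume "z \<in> {sumA (\<lambda>k. smulA (complex_of_real (rr k * \<theta> k)) (modA K (f k))) 2 | \<theta>.
                          (\<forall>k<2. 0 < \<theta> k) \<and> (\<Prod>k<2. \<theta> k powr rr k) = 1}"
    then obtain \<theta> where z: "z = sumA (\<lambda>k. smulA (complex_of_real (rr k * \<theta> k)) (modA K (f k))) 2"
      and p: "\<forall>k<2. 0 < \<theta> k" and pr: "(\<Prod>k<2. \<theta> k powr rr k) = 1" by blast
    have "z = (Gf s x 1 (\<theta> 0) (\<theta> 1), 0)"
      unfolding z sumA_def using mf0 mf1 by (simp only: smulA_real) (simp add: numeral_2_eq_2 Gf_def rr_def)
    moreover have "valid s (\<theta> 0) (\<theta> 1)"
      using p pr by (simp add: valid_def numeral_2_eq_2 rr_def)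
    ultimately show "z \<in> (\<lambda>y. (y, 0)) ` Fs s x" unfolding Fs_def by blast
  next
    fix z :: "'e cpx" assume "z \<in> (\<lambda>y. (y, 0)) ` Fs s x"
    then obtain t1 t2 where z: "z = (Gf s x 1 t1 t2, 0)" and v: "valid s t1 t2"
      unfolding Fs_def by blast
    define \<theta> :: "nat \<Rightarrow> real" where "\<theta> = (\<lambda>k. if k = 0 then t1 else t2)"
    have "z = sumA (\<lambda>k. smulA (complex_of_real (rr k * \<theta> k)) (modA K (f k))) 2"
      unfolding z sumA_def using mf0 mf1 by (simp only: smulA_real) (simp add: numeral_2_eq_2 Gf_def rr_def \<theta>_def)
    moreover have "(\<forall>k<2. 0 < \<theta> k) \<and> (\<Prod>k<2. \<theta> k powr rr k) = 1"
      using v by (auto simp: valid_def numeral_2_eq_2 rr_def \<theta>_def less_Suc_eq)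
    ultimately show "z \<in> {sumA (\<lambda>k. smulA (complex_of_real (rr k * \<theta> k)) (modA K (f k))) 2 | \<theta>.
                          (\<forall>k<2. 0 < \<theta> k) \<and> (\<Prod>k<2. \<theta> k powr rr k) = 1}" by blast
  qed
  have inf2: "is_infA K ((\<lambda>y. (y, 0)) ` Fs s x) s0'" using inf unfolding Sw .
  have c: "s0' = (fst s0', 0) \<and> glb (Fs s x) (fst s0')" by (rule is_infA_img[OF inf2 Fs_ne])
  have "infA K ?Sp = s0'" unfolding Sp by (rule infA_eq[OF inf2])
  then have "powA K (x, 0) r = mulA (x ^ nat \<lfloor>r\<rfloor>, 0) s0'"
    using sne unfolding powA_def Let_def s_def[symmetric] by (simp add: powA_nat_real)
  also have "\<dots> = (x ^ nat \<lfloor>r\<rfloor> * fst s0', 0)" using c by (metis (no_types) mulA_def fst_conv snd_conv mult_zero_right mult_zero_left diff_zero add_0)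
  finally show "\<exists>g. glb (Fs (r - of_int \<lfloor>r\<rfloor>) x) g \<and> powA K (x, 0) r = (x ^ nat \<lfloor>r\<rfloor> * g, 0)"
    using c unfolding s_def by blast
qed


theorem corollary4p4:
  fixes K :: scalar_field
    and C :: "'a::{real_algebra_1, lattice_ab_group_add, ordered_real_vector} cpx set"
    and T :: "'a cpx \<Rightarrow> 'b::{real_algebra_1, lattice_ab_group_add, ordered_real_vector} cpx"
    and a :: "'a cpx" and r :: real
  assumes "Phi_algebra K TYPE('a)" and "wgm_closed K TYPE('a)"
    and "Phi_algebra K TYPE('b)" and "wgm_closed K TYPE('b)"
    and "Phi_subalgebra K C"
    and "mult_vl_hom K C T" and "T unitA = unitA"
    and "a \<in> posA K" and "0 < r"
    and "a \<in> C" and "powA K a r \<in> C"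
  shows "T (powA K a r) = powA K (T a) r"
proof -
  note PA = assms(1) and WA = assms(2) and PB = assms(3) and WB = assms(4)
    and PS = assms(5) and MV = assms(6) and U = assms(7)
  have FA: "fa TYPE('a)" by (rule Phi_fa[OF PA])
  have FB: "fa TYPE('b)" by (rule Phi_fa[OF PB])
  obtain x where ax: "a = (x, 0)" and x0: "0 \<le> x" using assms(8) by (cases a) (auto simp: posA_iff)
  have xC: "(x, 0) \<in> C" using assms(10) ax by simp
  define y where "y = tau T x"
  have Ta: "T a = (y, 0)" unfolding ax y_def by (rule T_snd[OF PS MV xC])
  have y0: "0 \<le> y"
  proof -
    have "sup x (- x) = x" by (rule sup_neg_id[OF x0])
    then have "y = sup y (- y)" using tau_abs[OF PS MV xC] unfolding y_def by simp
    then show ?thesis using sup_neg_nonneg[of y] by simp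
  qed
  define n where "n = nat \<lfloor>r\<rfloor>"
  show ?thesis
  proof (cases "r - of_int \<lfloor>r\<rfloor> = 0")
    case True
    have "powA K a r = (x ^ n, 0)" unfolding ax n_def by (rule powA_char(1)[OF PA WA x0 True])
    moreover have "powA K (T a) r = (y ^ n, 0)" unfolding Ta n_def by (rule powA_char(1)[OF PB WB y0 True])
    moreover have "T (x ^ n, 0) = (y ^ n, 0)"
      using C_pow[OF PS MV U xC, of n] T_snd[OF PS MV, of "x ^ n"] unfolding y_def by simp
    ultimately show ?thesis by simp
  next
    case False
    define s where "s = r - of_int \<lfloor>r\<rfloor>"
    have s0: "0 < s" using False unfolding s_def by (smt (verit) of_int_floor_le)
    have s1: "s < 1" unfolding s_def by linarith
    obtain gA where gA: "glb (Fs s x) gA" and pA: "powA K a r = (x ^ n * gA, 0)"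
      using powA_char(2)[OF PA WA x0 False] unfolding ax n_def s_def by blast
    obtain gB where gB: "glb (Fs s y) gB" and pB: "powA K (T a) r = (y ^ n * gB, 0)"
      using powA_char(2)[OF PB WB y0 False] unfolding Ta n_def s_def by blast
    have PC: "(x ^ n * gA, 0) \<in> C" using assms(11) pA by simp
    have xnC: "(x ^ n, 0) \<in> C" and txn: "tau T (x ^ n) = y ^ n"
      using C_pow[OF PS MV U xC, of n] unfolding y_def by auto
    have GC: "(x ^ n * Gf s x 1 t1 t2, 0) \<in> C \<and> tau T (x ^ n * Gf s x 1 t1 t2) = y ^ n * Gf s y 1 t1 t2" for t1 t2
    proof -
      have g: "(Gf s x 1 t1 t2, 0) \<in> C" "tau T (Gf s x 1 t1 t2) = Gf s y 1 t1 t2"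
        using C_Gf[OF PS MV U xC] unfolding y_def by auto
      show ?thesis using C_mult[OF PS MV xnC g(1)] tau_mult[OF PS MV xnC g(1)] txn g(2) by simp
    qed
    have le1: "tau T (x ^ n * gA) \<le> y ^ n * gB"
    proof (rule mainE(3)[OF FB y0 s0 s1 gB])
      fix t1 t2 assume v: "valid s t1 t2"
      have "tau T (x ^ n * gA) \<le> tau T (x ^ n * Gf s x 1 t1 t2)"
        using tau_mono[OF PS MV PC conjunct1[OF GC] mainE(1)[OF FA x0 s0 s1 gA v]] .
      then show "tau T (x ^ n * gA) \<le> y ^ n * Gf s y 1 t1 t2" using GC by simp
    qed
    have le2: "y ^ n * gB \<le> tau T (x ^ n * gA)"
    proof (rule fa_arch_eps[OF FB])
      show "0 \<le> y ^ n * y + y ^ n" using fa_mult_nonneg[OF FB fa_pow_nonneg[OF FB y0] y0] fa_pow_nonneg[OF FB y0] by simp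
    next
      fix \<epsilon> :: real assume e: "0 < \<epsilon>"
      let ?N = "gridN s \<epsilon>"
      let ?fA = "\<lambda>k. x ^ n * Gf s x 1 (grid1 \<epsilon> k) (phi s (grid1 \<epsilon> k))"
      have fC: "(?fA k, 0) \<in> C" for k using GC by blast
      have tf: "finf (\<lambda>k. tau T (?fA k)) ?N = finf (\<lambda>k. y ^ n * Gf s y 1 (grid1 \<epsilon> k) (phi s (grid1 \<epsilon> k))) ?N"
        using GC by simp
      have finfC: "(finf ?fA ?N, 0) \<in> C" and tfinf: "tau T (finf ?fA ?N) = finf (\<lambda>k. tau T (?fA k)) ?N"
        using tau_finf[OF PS MV, of ?N ?fA] fC by auto
      have "y ^ n * gB \<le> finf (\<lambda>k. y ^ n * Gf s y 1 (grid1 \<epsilon> k) (phi s (grid1 \<epsilon> k))) ?N"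
      proof (rule finf_greatest)
        fix k
        have "0 < grid1 \<epsilon> k" using e by simp
        then show "y ^ n * gB \<le> y ^ n * Gf s y 1 (grid1 \<epsilon> k) (phi s (grid1 \<epsilon> k))"
          by (intro mainE(1)[OF FB y0 s0 s1 gB] valid_phi[OF s0 s1])
      qed
      also have "\<dots> = tau T (finf ?fA ?N)" using tf tfinf by simp
      also have "\<dots> \<le> tau T (x ^ n * gA + \<epsilon> *\<^sub>R (x ^ n * x + x ^ n))"
      proof (rule tau_mono[OF PS MV finfC])
        have xnx: "(x ^ n * x, 0) \<in> C" using C_mult[OF PS MV xnC xC] by blast
        have z: "(x ^ n * x + x ^ n, 0) \<in> C" using C_add[OF PS MV xnx xnC] by blast
        have ez: "(\<epsilon> *\<^sub>R (x ^ n * x + x ^ n), 0) \<in> C" using C_scale[OF PS MV z] by blast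
        show "(x ^ n * gA + \<epsilon> *\<^sub>R (x ^ n * x + x ^ n), 0) \<in> C" using C_add[OF PS MV PC ez] by blast
        show "finf ?fA ?N \<le> x ^ n * gA + \<epsilon> *\<^sub>R (x ^ n * x + x ^ n)"
          by (rule mainE(2)[OF FA x0 s0 s1 gA e])
      qed
      also have "\<dots> = tau T (x ^ n * gA) + \<epsilon> *\<^sub>R (y ^ n * y + y ^ n)"
      proof -
        have xnx: "(x ^ n * x, 0) \<in> C" using C_mult[OF PS MV xnC xC] by blast
        have z: "(x ^ n * x + x ^ n, 0) \<in> C" using C_add[OF PS MV xnx xnC] by blast
        have ez: "(\<epsilon> *\<^sub>R (x ^ n * x + x ^ n), 0) \<in> C" using C_scale[OF PS MV z] by blast
        have "tau T (x ^ n * gA + \<epsilon> *\<^sub>R (x ^ n * x + x ^ n)) = tau T (x ^ n * gA) + \<epsilon> *\<^sub>R tau T (x ^ n * x + x ^ n)"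
          using tau_add[OF PS MV PC ez] tau_scale[OF PS MV z] by simp
        also have "tau T (x ^ n * x + x ^ n) = y ^ n * y + y ^ n"
          using tau_add[OF PS MV xnx xnC] tau_mult[OF PS MV xnC xC] txn unfolding y_def by simp
        finally show ?thesis .
      qed
      finally show "y ^ n * gB \<le> tau T (x ^ n * gA) + \<epsilon> *\<^sub>R (y ^ n * y + y ^ n)" .
    qed
    have "T (powA K a r) = (tau T (x ^ n * gA), 0)" unfolding pA by (rule T_snd[OF PS MV PC])
    also have "\<dots> = (y ^ n * gB, 0)" using le1 le2 by simp
    finally show ?thesis using pB by simp
  qed
qed

end
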